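(* Let $a:[0,\infty)\to\mathbb{R}$ satisfy $c_1\le a(r)\le c_2$ for all $r\ge0$ (constants $0<c_1\le c_2$) and $|a(r_1)-a(r_2)|\le L_a|r_1-r_2|$ for all $r_1,r_2\ge0$ (constant $L_a>0$). For $x_1,\dots,x_N\in\mathbb{R}^d$ set $\phi_{ij}=\frac{a(\|x_i-x_j\|)}{\sum_{k=1}^Na(\|x_i-x_k\|)}$. Then \[ |\phi_{il}-\phi_{jl}|\le\|\phi\|_{\mathrm{Lip}}\|x_i-x_j\|\qquad\text{for all } i,j,l\in\{1,\dots,N\}, \] where $\|\phi\|_{\mathrm{Lip}}:=\frac{L_a}{Nc_1}\left(1+\frac{c_2}{c_1}\right)$.
   Context: $\|\cdot\|$ denotes the Euclidean norm on $\mathbb{R}^d$. *)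

theory Defs
  imports "HOL-Analysis.Analysis"
begin

definition phi :: "(real \<Rightarrow> real) \<Rightarrow> nat \<Rightarrow> (nat \<Rightarrow> 'a::euclidean_space) \<Rightarrow> nat \<Rightarrow> nat \<Rightarrow> real" where
  "phi a N x i j = a (norm (x i - x j)) / (\<Sum>k=1..N. a (norm (x i - x k)))"

definition phi_Lip :: "real \<Rightarrow> real \<Rightarrow> real \<Rightarrow> nat \<Rightarrow> real" where
  "phi_Lip La c1 c2 N = La / (real N * c1) * (1 + c2 / c1)"

end

theory Submission
  imports Defs
begin

theorem lemma3p1:
  fixes a :: "real \<Rightarrow> real" and c1 c2 La :: real and N :: nat
    and x :: "nat \<Rightarrow> 'a::euclidean_space"
  assumes "0 < c1" and "c1 \<le> c2" and "0 < La"
    and "\<And>r. r \<ge> 0 \<Longrightarrow> c1 \<le> a r \<and> a r \<le> c2"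
    and "\<And>r1 r2. r1 \<ge> 0 \<Longrightarrow> r2 \<ge> 0 \<Longrightarrow> \<bar>a r1 - a r2\<bar> \<le> La * \<bar>r1 - r2\<bar>"
    and "i \<in> {1..N}" and "j \<in> {1..N}" and "l \<in> {1..N}"
  shows "\<bar>phi a N x i l - phi a N x j l\<bar> \<le> phi_Lip La c1 c2 N * norm (x i - x j)"
proof -
  define D where "D = norm (x i - x j)"
  define Ai where "Ai = a (norm (x i - x l))"
  define Aj where "Aj = a (norm (x j - x l))"
  define Si where "Si = (\<Sum>k=1..N. a (norm (x i - x k)))"
  define Sj where "Sj = (\<Sum>k=1..N. a (norm (x j - x k)))"
  have N1: "real N \<ge> 1" using assms(6) by auto
  have lip: "\<bar>a (norm (x i - x k)) - a (norm (x j - x k))\<bar> \<le> La * D" for k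
  proof -
    have "\<bar>a (norm (x i - x k)) - a (norm (x j - x k))\<bar> \<le> La * \<bar>norm (x i - x k) - norm (x j - x k)\<bar>"
      using assms(5) by simp
    also have "\<bar>norm (x i - x k) - norm (x j - x k)\<bar> \<le> norm ((x i - x k) - (x j - x k))"
      by (rule norm_triangle_ineq3)
    then have "La * \<bar>norm (x i - x k) - norm (x j - x k)\<bar> \<le> La * D"
      unfolding D_def using assms(3) by (simp add: mult_left_mono)
    finally show ?thesis .
  qed
  have hA: "\<bar>Ai - Aj\<bar> \<le> La * D" unfolding Ai_def Aj_def by (rule lip)
  have hS: "\<bar>Si - Sj\<bar> \<le> real N * (La * D)"
  proof -
    have "\<bar>Si - Sj\<bar> = \<bar>\<Sum>k=1..N. a (norm (x i - x k)) - a (norm (x j - x k))\<bar>"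
      unfolding Si_def Sj_def by (simp add: sum_subtractf)
    also have "\<dots> \<le> (\<Sum>k=1..N. \<bar>a (norm (x i - x k)) - a (norm (x j - x k))\<bar>)"
      by (rule sum_abs)
    also have "\<dots> \<le> (\<Sum>k=1..N. La * D)" by (rule sum_mono) (rule lip)
    finally show ?thesis by simp
  qed
  have Si: "Si \<ge> real N * c1"
  proof -
    have "(\<Sum>k=1..N. c1) \<le> Si" unfolding Si_def by (rule sum_mono) (use assms(4) in auto)
    then show ?thesis by simp
  qed
  have Sj: "Sj \<ge> real N * c1"
  proof -
    have "(\<Sum>k=1..N. c1) \<le> Sj" unfolding Sj_def by (rule sum_mono) (use assms(4) in auto)
    then show ?thesis by simp
  qed
  have Aj: "0 \<le> Aj" "Aj \<le> c2" unfolding Aj_def using assms(4)[of "norm (x j - x l)"] assms(1) by auto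
  have Nc: "real N * c1 > 0" using N1 assms(1) by simp
  have Sip: "Si > 0" "Sj > 0" using Si Sj Nc by auto
  have D0: "D \<ge> 0" unfolding D_def by simp
  have eq: "Ai / Si - Aj / Sj = (Ai - Aj) / Si + Aj * (Sj - Si) / (Si * Sj)"
    using Sip by (simp add: field_simps)
  have t1: "\<bar>(Ai - Aj) / Si\<bar> \<le> La * D / (real N * c1)"
  proof -
    have "\<bar>(Ai - Aj) / Si\<bar> = \<bar>Ai - Aj\<bar> / Si" using Sip by simp
    also have "\<dots> \<le> La * D / Si" using hA Sip by (simp add: divide_right_mono)
    also have "\<dots> \<le> La * D / (real N * c1)"
      using Si Nc D0 assms(3) by (intro divide_left_mono) auto
    finally show ?thesis .
  qed
  have t2: "\<bar>Aj * (Sj - Si) / (Si * Sj)\<bar> \<le> c2 * (real N * (La * D)) / ((real N * c1) * (real N * c1))"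
  proof -
    have "\<bar>Aj * (Sj - Si) / (Si * Sj)\<bar> = Aj * \<bar>Si - Sj\<bar> / (Si * Sj)"
      using Sip Aj by (simp add: abs_mult abs_minus_commute)
    also have "\<dots> \<le> c2 * (real N * (La * D)) / (Si * Sj)"
      using Sip Aj hS by (intro divide_right_mono mult_mono) auto
    also have "\<dots> \<le> c2 * (real N * (La * D)) / ((real N * c1) * (real N * c1))"
      using Si Sj Nc D0 assms(1) assms(3) Aj by (intro divide_left_mono mult_mono mult_nonneg_nonneg) auto
    finally show ?thesis .
  qed
  have fin: "La * D / (real N * c1) + c2 * (real N * (La * D)) / ((real N * c1) * (real N * c1))
      = phi_Lip La c1 c2 N * D"
    unfolding phi_Lip_def using Nc assms(1) N1 by (simp add: field_simps)
  have "\<bar>phi a N x i l - phi a N x j l\<bar> = \<bar>Ai / Si - Aj / Sj\<bar>"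
    unfolding phi_def Ai_def Aj_def Si_def Sj_def by simp
  also have "\<dots> \<le> \<bar>(Ai - Aj) / Si\<bar> + \<bar>Aj * (Sj - Si) / (Si * Sj)\<bar>"
    unfolding eq by (rule abs_triangle_ineq)
  also have "\<dots> \<le> phi_Lip La c1 c2 N * D" using t1 t2 fin by linarith
  finally show ?thesis unfolding D_def .
qed

end
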